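(* Let $X_N\in\mathbb{R}^{N\times M}$ (rows $x_n^\top$), $Y_N\in\mathbb{R}^N$, test vector $x\in\mathbb{R}^M$, $\lambda>0$, $\sigma>0$, and luckiness $w(\theta)=\exp\{-\frac{\lambda}{2\sigma^2}\|\theta\|^2\}$. Let $P_\lambda=(X_N^\top X_N+\lambda I)^{-1}$, $K_\lambda=1+x^\top P_\lambda x$, $\hat\theta_\lambda=P_\lambda X_N^\top Y_N$, and for $y\in\mathbb{R}$ let $\hat\theta_y=\arg\min_\theta\big[\sum_{n=1}^N(y_n-\theta^\top x_n)^2+(y-\theta^\top x)^2+\lambda\|\theta\|^2\big]$. Define $$\hat\mu=\frac{\lambda K_\lambda\,\hat\theta_\lambda^\top P_\lambda x}{1+\lambda x^\top P_\lambda^2x},\quad \hat\sigma^2=\frac{\sigma^2K_\lambda^2}{1+\lambda x^\top P_\lambda^2x},\quad c=\exp\Big\{\frac{1}{2\sigma^2}\Big[\frac{(\lambda\hat\theta_\lambda^\top P_\lambda x)^2}{1+\lambda x^\top P_\lambda^2x}-\lambda\|\hat\theta_\lambda\|^2\Big]\Big\}.$$ Then for all $y\in\mathbb{R}$, $$p_{\hat\theta_y}(y\mid x)\,w(\hat\theta_y)=\frac{c}{\sqrt{2\pi\sigma^2}}\exp\Big\{-\frac{1}{2\hat\sigma^2}\big(y-\hat\theta_\lambda^\top x+\hat\mu\big)^2\Big\}.$$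
   Context: $p_\theta(y\mid x)=\frac{1}{\sqrt{2\pi\sigma^2}}\exp\{-\frac{1}{2\sigma^2}(y-\theta^\top x)^2\}$. *)

theory Defs
  imports "HOL-Analysis.Analysis"
begin

definition gauss_dens :: "real \<Rightarrow> real ^ 'm \<Rightarrow> real \<Rightarrow> real ^ 'm \<Rightarrow> real" where
  "gauss_dens \<sigma> \<theta> y x = 1 / sqrt (2 * pi * \<sigma>\<^sup>2) * exp (- (1 / (2 * \<sigma>\<^sup>2)) * (y - \<theta> \<bullet> x)\<^sup>2)"

definition luck :: "real \<Rightarrow> real \<Rightarrow> real ^ 'm \<Rightarrow> real" where
  "luck lam \<sigma> \<theta> = exp (- (lam / (2 * \<sigma>\<^sup>2)) * (norm \<theta>)\<^sup>2)"

definition ridge_obj :: "real ^ 'm ^ 'n \<Rightarrow> real ^ 'n \<Rightarrow> real ^ 'm \<Rightarrow> real \<Rightarrow> real \<Rightarrow> real ^ 'm \<Rightarrow> real" where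
  "ridge_obj X Y x y lam \<theta> =
     (\<Sum>n\<in>UNIV. (Y $ n - \<theta> \<bullet> (X $ n))\<^sup>2) + (y - \<theta> \<bullet> x)\<^sup>2 + lam * (norm \<theta>)\<^sup>2"

definition theta_y :: "real ^ 'm ^ 'n \<Rightarrow> real ^ 'n \<Rightarrow> real ^ 'm \<Rightarrow> real \<Rightarrow> real \<Rightarrow> real ^ 'm" where
  "theta_y X Y x y lam = arg_min (ridge_obj X Y x y lam) (\<lambda>_. True)"

end

theory Submission
  imports Defs
begin

lemma tX_inner: fixes X :: "real ^ 'm ^ 'n" shows "u \<bullet> (transpose X *v v) = (X *v u) \<bullet> v"
  by (metis dot_lmul_matrix inner_commute transpose_matrix_vector)

lemma mat1_scaled: "(lam *\<^sub>R mat 1) *v (d :: real ^ 'm) = lam *\<^sub>R d"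
  by (metis matrix_vector_mul_lid scaleR_matrix_vector_assoc)

lemma sum_rows: fixes X :: "real ^ 'm ^ 'n"
  shows "(\<Sum>n\<in>UNIV. (Y $ n - \<theta> \<bullet> (X $ n))\<^sup>2) = (norm (Y - X *v \<theta>))\<^sup>2"
proof -
  have "(norm (Y - X *v \<theta>))\<^sup>2 = (Y - X *v \<theta>) \<bullet> (Y - X *v \<theta>)" by (simp add: power2_norm_eq_inner)
  also have "\<dots> = (\<Sum>n\<in>UNIV. (Y $ n - \<theta> \<bullet> (X $ n))\<^sup>2)"
    unfolding inner_vec_def
    by (simp add: inner_vec_def matrix_vector_mult_def power2_eq_square mult.commute)
  finally show ?thesis by simp
qed

lemma obj_expand:
  fixes X :: "real ^ 'm ^ 'n" and A :: "real ^ 'm ^ 'm"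
  assumes Adef: "A = transpose X ** X + lam *\<^sub>R mat 1"
    and ne: "A *v ts = transpose X *v Y + (y - x \<bullet> ts) *\<^sub>R x"
  shows "ridge_obj X Y x y lam (ts + d) = ridge_obj X Y x y lam ts
           + (norm (X *v d))\<^sup>2 + (x \<bullet> d)\<^sup>2 + lam * (norm d)\<^sup>2"
proof -
  define R where "R = Y - X *v ts"
  define s where "s = y - x \<bullet> ts"
  have Ats: "A *v ts = transpose X *v (X *v ts) + lam *\<^sub>R ts"
    unfolding Adef by (simp add: matrix_vector_mult_add_rdistrib mat1_scaled matrix_vector_mul_assoc)
  have cross: "R \<bullet> (X *v d) + s * (x \<bullet> d) - lam * (ts \<bullet> d) = 0"
  proof -
    have "R \<bullet> (X *v d) = d \<bullet> (transpose X *v R)" by (metis tX_inner inner_commute)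
    also have "\<dots> = d \<bullet> (transpose X *v Y) - d \<bullet> (transpose X *v (X *v ts))"
      unfolding R_def by (simp add: matrix_vector_mult_diff_distrib inner_diff_right)
    finally have 1: "R \<bullet> (X *v d) = d \<bullet> (transpose X *v Y) - d \<bullet> (transpose X *v (X *v ts))" .
    have 2: "d \<bullet> (transpose X *v (X *v ts)) + lam * (ts \<bullet> d) = d \<bullet> (transpose X *v Y) + s * (x \<bullet> d)"
    proof -
      have "d \<bullet> (A *v ts) = d \<bullet> (transpose X *v Y) + s * (x \<bullet> d)"
        using ne by (simp add: s_def inner_add_right inner_commute)
      moreover have "d \<bullet> (A *v ts) = d \<bullet> (transpose X *v (X *v ts)) + lam * (ts \<bullet> d)"
        using Ats by (simp add: inner_add_right inner_commute)
      ultimately show ?thesis by simp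
    qed
    show ?thesis using 1 2 by simp
  qed
  have e1: "(norm (Y - X *v (ts + d)))\<^sup>2 = (norm R)\<^sup>2 - 2 * (R \<bullet> (X *v d)) + (norm (X *v d))\<^sup>2"
  proof -
    have "Y - X *v (ts + d) = R - X *v d" by (simp add: R_def matrix_vector_right_distrib)
    thus ?thesis by (simp add: power2_norm_eq_inner inner_diff_left inner_diff_right inner_commute)
  qed
  have e2: "(y - (ts + d) \<bullet> x)\<^sup>2 = s\<^sup>2 - 2 * s * (x \<bullet> d) + (x \<bullet> d)\<^sup>2"
    by (simp add: s_def inner_add_left inner_commute power2_eq_square algebra_simps)
  have e3: "(norm (ts + d))\<^sup>2 = (norm ts)\<^sup>2 + 2 * (ts \<bullet> d) + (norm d)\<^sup>2"
    by (simp add: power2_norm_eq_inner inner_add_left inner_add_right inner_commute)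
  have o1: "ridge_obj X Y x y lam (ts + d) = (norm (Y - X *v (ts + d)))\<^sup>2 + (y - (ts + d) \<bullet> x)\<^sup>2 + lam * (norm (ts + d))\<^sup>2"
    unfolding ridge_obj_def sum_rows ..
  have o2: "ridge_obj X Y x y lam ts = (norm R)\<^sup>2 + s\<^sup>2 + lam * (norm ts)\<^sup>2"
    unfolding ridge_obj_def sum_rows R_def s_def by (simp add: inner_commute)
  show ?thesis unfolding o1 o2 e1 e2 e3 using cross by (simp add: algebra_simps)
qed


lemma quad_nonneg:
  fixes X :: "real ^ 'm ^ 'n"
  shows "d \<bullet> ((transpose X ** X + lam *\<^sub>R mat 1) *v d) = (norm (X *v d))\<^sup>2 + lam * (norm d)\<^sup>2"
proof -
  have "d \<bullet> (transpose X *v (X *v d)) = (X *v d) \<bullet> (X *v d)" by (rule tX_inner)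
  thus ?thesis by (simp add: matrix_vector_mult_add_rdistrib mat1_scaled inner_add_right
      matrix_vector_mul_assoc[symmetric] power2_norm_eq_inner del: transpose_matrix_vector)
qed

lemma Asym:
  fixes X :: "real ^ 'm ^ 'n"
  shows "u \<bullet> ((transpose X ** X + lam *\<^sub>R mat 1) *v v) = ((transpose X ** X + lam *\<^sub>R mat 1) *v u) \<bullet> v"
proof -
  have "u \<bullet> (transpose X *v (X *v v)) = (X *v u) \<bullet> (X *v v)" by (rule tX_inner)
  moreover have "v \<bullet> (transpose X *v (X *v u)) = (X *v v) \<bullet> (X *v u)" by (rule tX_inner)
  ultimately show ?thesis by (simp add: matrix_vector_mult_add_rdistrib mat1_scaled inner_add_right inner_add_left
      matrix_vector_mul_assoc[symmetric] inner_commute del: transpose_matrix_vector)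
qed

theorem lemma1:
  fixes X :: "real ^ 'm ^ 'n" and Y :: "real ^ 'n" and x :: "real ^ 'm"
    and lam \<sigma> y :: real
  assumes "lam > 0" and "\<sigma> > 0"
  shows
    "let P = matrix_inv (transpose X ** X + lam *\<^sub>R mat 1);
         K = 1 + x \<bullet> (P *v x);
         th = P *v (transpose X *v Y);
         D = 1 + lam * (x \<bullet> ((P ** P) *v x));
         mu = lam * K * (th \<bullet> (P *v x)) / D;
         s2 = \<sigma>\<^sup>2 * K\<^sup>2 / D;
         c = exp (1 / (2 * \<sigma>\<^sup>2) * ((lam * (th \<bullet> (P *v x)))\<^sup>2 / D - lam * (norm th)\<^sup>2));
         ty = theta_y X Y x y lam
     in gauss_dens \<sigma> ty y x * luck lam \<sigma> ty
        = c / sqrt (2 * pi * \<sigma>\<^sup>2) * exp (- (1 / (2 * s2)) * (y - th \<bullet> x + mu)\<^sup>2)"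
proof -
  define A where "A = transpose X ** X + lam *\<^sub>R mat 1"
  define P where "P = matrix_inv A"
  have qA: "\<And>d. d \<bullet> (A *v d) = (norm (X *v d))\<^sup>2 + lam * (norm d)\<^sup>2"
    unfolding A_def by (rule quad_nonneg)
  have sA: "\<And>u v. u \<bullet> (A *v v) = (A *v u) \<bullet> v"
    unfolding A_def by (rule Asym)
  have "\<forall>d. A *v d = 0 \<longrightarrow> d = 0"
  proof (intro allI impI)
    fix d assume "A *v d = 0"
    hence "(norm (X *v d))\<^sup>2 + lam * (norm d)\<^sup>2 = 0" using qA[of d] by simp
    moreover have "(norm (X *v d))\<^sup>2 \<ge> 0" by simp
    ultimately have "lam * (norm d)\<^sup>2 \<le> 0" by linarith
    with assms(1) show "d = 0"
      by (metis mult_pos_pos norm_eq_zero not_less zero_less_power2)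
  qed
  then obtain B where "B ** A = mat 1" using matrix_left_invertible_ker by blast
  hence "invertible A" using invertible_left_inverse by blast
  hence "A ** P = mat 1 \<and> P ** A = mat 1"
    unfolding P_def matrix_inv_def invertible_def by (rule someI_ex)
  hence AP: "\<And>v. A *v (P *v v) = v" and PA: "\<And>v. P *v (A *v v) = v"
    by (metis matrix_vector_mul_assoc matrix_vector_mul_lid)+
  have sP: "\<And>u v. u \<bullet> (P *v v) = (P *v u) \<bullet> v"
    by (metis AP sA)
  define px where "px = P *v x"
  define th where "th = P *v (transpose X *v Y)"
  define K where "K = 1 + x \<bullet> px"
  define a where "a = th \<bullet> px"
  define q where "q = px \<bullet> px"
  define D where "D = 1 + lam * q"
  define r where "r = y - th \<bullet> x"
  have xpx: "x \<bullet> px \<ge> 0"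
  proof -
    have "x \<bullet> px = px \<bullet> (A *v px)" unfolding px_def by (metis AP inner_commute)
    also have "\<dots> \<ge> 0" unfolding qA using assms(1) by simp
    finally show ?thesis .
  qed
  hence Kpos: "K > 0" unfolding K_def by simp
  have Dpos: "D > 0" unfolding D_def q_def using assms(1) by (simp add: add_pos_nonneg)
  have qdef: "x \<bullet> ((P ** P) *v x) = q"
    unfolding q_def px_def by (metis matrix_vector_mul_assoc sP)
  define ts where "ts = th + (r / K) *\<^sub>R px"
  have xts: "x \<bullet> ts = x \<bullet> th + (r / K) * (K - 1)"
    unfolding ts_def K_def by (simp add: inner_add_right)
  have yts: "y - x \<bullet> ts = r / K"
    using xts Kpos unfolding r_def by (simp add: inner_commute field_simps)
  have ne: "A *v ts = transpose X *v Y + (y - x \<bullet> ts) *\<^sub>R x"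
  proof -
    have "A *v ts = transpose X *v Y + (r / K) *\<^sub>R x"
      unfolding ts_def th_def px_def by (simp add: matrix_vector_right_distrib AP matrix_vector_mult_scaleR del: transpose_matrix_vector)
    thus ?thesis using yts by simp
  qed
  have expand: "\<And>d. ridge_obj X Y x y lam (ts + d) = ridge_obj X Y x y lam ts
           + (norm (X *v d))\<^sup>2 + (x \<bullet> d)\<^sup>2 + lam * (norm d)\<^sup>2"
    by (rule obj_expand[OF A_def ne])
  have ty: "theta_y X Y x y lam = ts"
  proof -
    have min: "is_arg_min (ridge_obj X Y x y lam) (\<lambda>_. True) ts"
      unfolding is_arg_min_def
    proof (clarsimp)
      fix z assume "ridge_obj X Y x y lam z < ridge_obj X Y x y lam ts"
      moreover have "ridge_obj X Y x y lam z = ridge_obj X Y x y lam (ts + (z - ts))" by simp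
      ultimately show False using expand[of "z - ts"] assms(1)
        by (smt (verit) mult_nonneg_nonneg zero_le_power2)
    qed
    have uniq: "z = ts" if "is_arg_min (ridge_obj X Y x y lam) (\<lambda>_. True) z" for z
    proof (rule ccontr)
      assume "z \<noteq> ts"
      hence "norm (z - ts) > 0" by simp
      hence "lam * (norm (z - ts))\<^sup>2 > 0" using assms(1) by simp
      moreover have "ridge_obj X Y x y lam z = ridge_obj X Y x y lam (ts + (z - ts))" by simp
      ultimately have "ridge_obj X Y x y lam ts < ridge_obj X Y x y lam z"
        using expand[of "z - ts"] by (smt (verit) zero_le_power2)
      thus False using that unfolding is_arg_min_def by blast
    qed
    show ?thesis unfolding theta_y_def arg_min_def
      using min uniq by (rule some_equality)
  qed
  have e1: "y - ts \<bullet> x = r / K" using yts by (simp add: inner_commute)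
  have e2: "(norm ts)\<^sup>2 = (norm th)\<^sup>2 + 2 * (r / K) * a + (r / K)\<^sup>2 * q"
    unfolding power2_norm_eq_inner ts_def a_def q_def
    by (simp add: inner_add_left inner_add_right inner_commute power2_eq_square algebra_simps)
  have expeq: "- (1 / (2 * \<sigma>\<^sup>2)) * (r / K)\<^sup>2 + - (lam / (2 * \<sigma>\<^sup>2)) * (norm ts)\<^sup>2
     = 1 / (2 * \<sigma>\<^sup>2) * ((lam * a)\<^sup>2 / D - lam * (norm th)\<^sup>2)
       + - (1 / (2 * (\<sigma>\<^sup>2 * K\<^sup>2 / D))) * (r + lam * K * a / D)\<^sup>2"
  proof -
    define t where "t = r / K"
    define N where "N = (norm th)\<^sup>2"
    have h1: "(r + lam * K * a / D)\<^sup>2 / (K\<^sup>2 / D) = D * (t + lam * a / D)\<^sup>2"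
      unfolding t_def using Kpos Dpos by (simp add: field_simps power2_eq_square)
    have h2: "t\<^sup>2 + lam * (N + 2 * t * a + t\<^sup>2 * q) = - ((lam * a)\<^sup>2 / D - lam * N) + D * (t + lam * a / D)\<^sup>2"
    proof -
      have "D * (t + lam * a / D)\<^sup>2 = D * t\<^sup>2 + 2 * lam * a * t + (lam * a)\<^sup>2 / D"
        using Dpos by (simp add: field_simps power2_eq_square)
      thus ?thesis unfolding D_def by (simp add: algebra_simps)
    qed
    have s0: "\<sigma>\<^sup>2 > 0" using assms(2) by simp
    have "- (1 / (2 * (\<sigma>\<^sup>2 * K\<^sup>2 / D))) * (r + lam * K * a / D)\<^sup>2
        = - (1 / (2 * \<sigma>\<^sup>2)) * ((r + lam * K * a / D)\<^sup>2 / (K\<^sup>2 / D))"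
      using Kpos Dpos s0 by (simp add: field_simps)
    also have "\<dots> = - (1 / (2 * \<sigma>\<^sup>2)) * (D * (t + lam * a / D)\<^sup>2)" using h1 by simp
    finally have h3: "- (1 / (2 * (\<sigma>\<^sup>2 * K\<^sup>2 / D))) * (r + lam * K * a / D)\<^sup>2 = - (1 / (2 * \<sigma>\<^sup>2)) * (D * (t + lam * a / D)\<^sup>2)" .
    have "- (1 / (2 * \<sigma>\<^sup>2)) * t\<^sup>2 + - (lam / (2 * \<sigma>\<^sup>2)) * (N + 2 * t * a + t\<^sup>2 * q)
       = - (1 / (2 * \<sigma>\<^sup>2)) * (t\<^sup>2 + lam * (N + 2 * t * a + t\<^sup>2 * q))"
      by (simp add: algebra_simps)
    also have "\<dots> = - (1 / (2 * \<sigma>\<^sup>2)) * (- ((lam * a)\<^sup>2 / D - lam * N) + D * (t + lam * a / D)\<^sup>2)"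
      using h2 by simp
    also have "\<dots> = 1 / (2 * \<sigma>\<^sup>2) * ((lam * a)\<^sup>2 / D - lam * N) + - (1 / (2 * \<sigma>\<^sup>2)) * (D * (t + lam * a / D)\<^sup>2)"
      by (simp add: algebra_simps)
    finally show ?thesis unfolding h3 e2 t_def[symmetric] N_def[symmetric] .
  qed
  show ?thesis
    unfolding Let_def A_def[symmetric] P_def[symmetric] px_def[symmetric] th_def[symmetric]
      qdef K_def[symmetric] a_def[symmetric] D_def[symmetric] ty
    unfolding gauss_dens_def luck_def e1 r_def[symmetric]
    using expeq by (simp add: mult_exp_exp[symmetric] exp_add[symmetric] algebra_simps)
qed

end
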